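(* Let $G$ be a finite directed graph and $R\subseteq V(G)$, and consider the maximal faces of $\mathrm{DT}_R(G)$ (all of which are directed forests with root set $R$). Call a vertex $v$ "left" if, in every maximal face of $\mathrm{DT}_R(G)$, the tree containing $v$ has the same root $r$ and the directed path from $r$ to $v$ is the same; call all other vertices "right". Then every edge $(x\rightarrow y)$ lying in some maximal face of $\mathrm{DT}_R(G)$ whose endpoints are on different sides (one left, one right) is nice in $\mathrm{DT}_R(G)$.
   Context: A directed forest in $G$ is a set of edges of $G$ which, viewed as a graph on $V(G)$, is acyclic and has at most one edge directed to each vertex; equivalently a disjoint union of directed trees with all edges oriented away from the root. Its roots are the vertices with no forest edge directed to them. $\mathrm{DT}(G)$ is the simplicial complex with vertex set $E(G)$ whose simplices are the directed forests; $\mathrm{DT}_R(G)$ is the subcomplex generated by the directed forests with root set exactly $R$. An edge $(x\rightarrow y)$ of $G$ is nice in a subcomplex $\Delta$ of $\mathrm{DT}(G)$ if (i) there is an edge $(z\rightarrow y)$ in $\Delta$ with $z\ne x$, and (ii) every forest $F\in\Delta$ without an edge directed to $y$ satisfies $F\cup\{(x\rightarrow y)\}\in\Delta$. *)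

theory Defs
  imports Main
begin

text \<open>A finite directed graph is given by a finite vertex set V and an edge set
  E \<subseteq> V \<times> V of ordered pairs (x, y), meaning the edge x \<rightarrow> y.\<close>

definition dforest :: "('a \<times> 'a) set \<Rightarrow> ('a \<times> 'a) set \<Rightarrow> bool" where
  "dforest E F \<longleftrightarrow> F \<subseteq> E \<and> acyclic F \<and>
     (\<forall>x z y. (x, y) \<in> F \<longrightarrow> (z, y) \<in> F \<longrightarrow> x = z)"

definition roots :: "'a set \<Rightarrow> ('a \<times> 'a) set \<Rightarrow> 'a set" where
  "roots V F = {v \<in> V. \<forall>u. (u, v) \<notin> F}"

definition DT_R :: "'a set \<Rightarrow> ('a \<times> 'a) set \<Rightarrow> 'a set \<Rightarrow> ('a \<times> 'a) set set" where
  "DT_R V E R = {F. \<exists>T. F \<subseteq> T \<and> dforest E T \<and> roots V T = R}"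

definition facets :: "'b set set \<Rightarrow> 'b set set" where
  "facets \<Delta> = {F \<in> \<Delta>. \<forall>F' \<in> \<Delta>. F \<subseteq> F' \<longrightarrow> F' = F}"

definition tree_root :: "'a set \<Rightarrow> ('a \<times> 'a) set \<Rightarrow> 'a \<Rightarrow> 'a" where
  "tree_root V F v = (THE r. r \<in> roots V F \<and> (r, v) \<in> F\<^sup>*)"

definition root_path :: "('a \<times> 'a) set \<Rightarrow> 'a \<Rightarrow> ('a \<times> 'a) set" where
  "root_path F v = {(a, b) \<in> F. (b, v) \<in> F\<^sup>*}"

definition left_vertex :: "'a set \<Rightarrow> ('a \<times> 'a) set \<Rightarrow> 'a set \<Rightarrow> 'a \<Rightarrow> bool" where
  "left_vertex V E R v \<longleftrightarrow> (\<exists>r P. \<forall>F \<in> facets (DT_R V E R).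
      tree_root V F v = r \<and> root_path F v = P)"

definition nice :: "('a \<times> 'a) set set \<Rightarrow> 'a \<Rightarrow> 'a \<Rightarrow> bool" where
  "nice \<Delta> x y \<longleftrightarrow>
     (\<exists>z. z \<noteq> x \<and> {(z, y)} \<in> \<Delta>) \<and>
     (\<forall>F \<in> \<Delta>. (\<forall>z. (z, y) \<notin> F) \<longrightarrow> insert (x, y) F \<in> \<Delta>)"

end

theory Submission
  imports Defs
begin

lemma df_sub: "dforest E T \<Longrightarrow> T \<subseteq> E"
  unfolding dforest_def by simp

lemma df_acyc: "dforest E T \<Longrightarrow> acyclic T"
  unfolding dforest_def by simp

lemma df_uniq: "dforest E T \<Longrightarrow> (a, b) \<in> T \<Longrightarrow> (c, b) \<in> T \<Longrightarrow> a = c"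
  unfolding dforest_def by metis

lemma df_intro: "T \<subseteq> E \<Longrightarrow> acyclic T \<Longrightarrow> (\<And>a b c. (a, b) \<in> T \<Longrightarrow> (c, b) \<in> T \<Longrightarrow> a = c) \<Longrightarrow> dforest E T"
  unfolding dforest_def by blast

lemma back_step:
  assumes "dforest E T" "(x, y) \<in> T" "(b, y) \<in> T\<^sup>*" "b \<noteq> y"
  shows "(b, x) \<in> T\<^sup>*"
  using assms(3)
proof (cases rule: rtranclE)
  case base then show ?thesis using assms(4) by simp
next
  case (step c)
  then have "c = x" using df_uniq[OF assms(1) _ assms(2)] by blast
  then show ?thesis using step by simp
qed

lemma path_lemma:
  assumes "dforest E T" "(x, y) \<in> T"
  shows "tree_root V T y = tree_root V T x"
    and "root_path T y = insert (x, y) (root_path T x)"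
    and "(x, y) \<notin> root_path T x"
proof -
  have ac: "acyclic T" using df_acyc[OF assms(1)] .
  have "(\<lambda>r. r \<in> roots V T \<and> (r, y) \<in> T\<^sup>*) = (\<lambda>r. r \<in> roots V T \<and> (r, x) \<in> T\<^sup>*)"
  proof (rule ext, rule iffI)
    fix r assume h: "r \<in> roots V T \<and> (r, y) \<in> T\<^sup>*"
    then have "r \<noteq> y" using assms(2) unfolding roots_def by blast
    then show "r \<in> roots V T \<and> (r, x) \<in> T\<^sup>*" using h back_step[OF assms] by blast
  next
    fix r assume h: "r \<in> roots V T \<and> (r, x) \<in> T\<^sup>*"
    then show "r \<in> roots V T \<and> (r, y) \<in> T\<^sup>*" using assms(2)
      by (meson rtrancl.rtrancl_into_rtrancl)
  qed
  then show "tree_root V T y = tree_root V T x" unfolding tree_root_def by simp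
  show nm: "(x, y) \<notin> root_path T x"
  proof
    assume "(x, y) \<in> root_path T x"
    then have "(y, x) \<in> T\<^sup>*" unfolding root_path_def by blast
    then have "(x, x) \<in> T\<^sup>+" using assms(2) by (meson rtrancl_into_trancl2)
    then show False using ac by (simp add: acyclic_def)
  qed
  show "root_path T y = insert (x, y) (root_path T x)"
  proof
    show "root_path T y \<subseteq> insert (x, y) (root_path T x)"
    proof
      fix e assume e: "e \<in> root_path T y"
      obtain a b where ab: "e = (a, b)" by fastforce
      have abT: "(a, b) \<in> T" "(b, y) \<in> T\<^sup>*" using e ab unfolding root_path_def by auto
      show "e \<in> insert (x, y) (root_path T x)"
      proof (cases "b = y")
        case True
        then have "a = x" using df_uniq[OF assms(1) abT(1)] assms(2) by simp
        then show ?thesis using ab True by simp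
      next
        case False
        then have "(b, x) \<in> T\<^sup>*" using back_step[OF assms abT(2)] by blast
        then show ?thesis using ab abT unfolding root_path_def by blast
      qed
    qed
  next
    show "insert (x, y) (root_path T x) \<subseteq> root_path T y"
    proof
      fix e assume e: "e \<in> insert (x, y) (root_path T x)"
      obtain a b where ab: "e = (a, b)" by fastforce
      show "e \<in> root_path T y"
      proof (cases "e = (x, y)")
        case True then show ?thesis using assms(2) unfolding root_path_def by blast
      next
        case False
        then have "(a, b) \<in> T" "(b, x) \<in> T\<^sup>*" using e ab unfolding root_path_def by auto
        moreover have "(b, y) \<in> T\<^sup>*" using calculation(2) assms(2)
          by (meson rtrancl.rtrancl_into_rtrancl)
        ultimately show ?thesis using ab unfolding root_path_def by blast
      qed
    qed
  qed
qed

lemma facet_forest: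
  assumes "F \<in> facets (DT_R V E R)"
  shows "dforest E F \<and> roots V F = R"
proof -
  from assms have F: "F \<in> DT_R V E R" and mx: "\<forall>F' \<in> DT_R V E R. F \<subseteq> F' \<longrightarrow> F' = F"
    unfolding facets_def by auto
  from F obtain T where T: "F \<subseteq> T" "dforest E T" "roots V T = R" unfolding DT_R_def by blast
  have "T \<in> DT_R V E R" using T unfolding DT_R_def by blast
  then have "T = F" using mx T(1) by blast
  then show ?thesis using T by simp
qed

lemma forest_facet:
  assumes "E \<subseteq> V \<times> V" "dforest E T" "roots V T = R"
  shows "T \<in> facets (DT_R V E R)"
proof -
  have "T \<in> DT_R V E R" using assms unfolding DT_R_def by blast
  moreover have "F' = T" if "F' \<in> DT_R V E R" "T \<subseteq> F'" for F'
  proof -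
    have "\<exists>T'. F' \<subseteq> T' \<and> dforest E T' \<and> roots V T' = R"
      using that(1) by (simp add: DT_R_def)
    then obtain T' where T': "F' \<subseteq> T'" "dforest E T'" "roots V T' = R"
      by blast
    have "T' \<subseteq> T"
    proof
      fix e assume e: "e \<in> T'"
      obtain a b where ab: "e = (a, b)" by fastforce
      have "(a, b) \<in> E" using e ab df_sub[OF T'(2)] by blast
      then have bV: "b \<in> V" using assms(1) by blast
      have "b \<notin> roots V T'" using e ab unfolding roots_def by blast
      then have "b \<notin> roots V T" using T'(3) assms(3) by simp
      then obtain c where c: "(c, b) \<in> T" using bV unfolding roots_def by blast
      then have "(c, b) \<in> T'" using that(2) T'(1) by blast
      then have "c = a" using e ab df_uniq[OF T'(2)] by blast
      then show "e \<in> T" using c ab by simp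
    qed
    then show ?thesis using that(2) T'(1) by blast
  qed
  ultimately show ?thesis unfolding facets_def by blast
qed

theorem proposition2p5:
  fixes V :: "'a set" and E :: "('a \<times> 'a) set" and R :: "'a set" and x y :: 'a
  assumes "finite V" and "E \<subseteq> V \<times> V" and "R \<subseteq> V"
    and "\<exists>F \<in> facets (DT_R V E R). (x, y) \<in> F"
    and "left_vertex V E R x \<noteq> left_vertex V E R y"
  shows "nice (DT_R V E R) x y"
proof -
  obtain F0 where F0: "F0 \<in> facets (DT_R V E R)" "(x, y) \<in> F0" using assms(4) by blast
  have F0f: "dforest E F0" "roots V F0 = R" using facet_forest[OF F0(1)] by auto
  have yV: "y \<in> V" using F0(2) df_sub[OF F0f(1)] assms(2) by blast
  have yR: "y \<notin> R" using F0(2) F0f(2) unfolding roots_def by blast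
  have notB: "\<not> (left_vertex V E R y \<and> \<not> left_vertex V E R x)"
  proof
    assume h: "left_vertex V E R y \<and> \<not> left_vertex V E R x"
    then obtain r P where rP: "\<forall>F \<in> facets (DT_R V E R). tree_root V F y = r \<and> root_path F y = P"
      unfolding left_vertex_def by blast
    have "(x, y) \<in> root_path F0 y" using F0(2) unfolding root_path_def by blast
    then have xyP: "(x, y) \<in> P" using rP F0(1) by blast
    have "\<forall>F \<in> facets (DT_R V E R). tree_root V F x = r \<and> root_path F x = P - {(x, y)}"
    proof
      fix F assume F: "F \<in> facets (DT_R V E R)"
      have Ff: "dforest E F" using facet_forest[OF F] by blast
      have "(x, y) \<in> F" using xyP rP F unfolding root_path_def by blast
      note pl = path_lemma[OF Ff this]
      show "tree_root V F x = r \<and> root_path F x = P - {(x, y)}"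
        using pl rP F by auto
    qed
    then have "left_vertex V E R x" unfolding left_vertex_def by blast
    then show False using h by blast
  qed
  with assms(5) have xl: "left_vertex V E R x" and yr: "\<not> left_vertex V E R y" by auto
  from xl obtain r P where rP: "\<forall>F \<in> facets (DT_R V E R). tree_root V F x = r \<and> root_path F x = P"
    unfolding left_vertex_def by blast
  have part1: "\<exists>z. z \<noteq> x \<and> {(z, y)} \<in> DT_R V E R"
  proof (rule ccontr)
    assume nz: "\<not> ?thesis"
    have all: "(x, y) \<in> F" if F: "F \<in> facets (DT_R V E R)" for F
    proof -
      have Ff: "dforest E F" "roots V F = R" using facet_forest[OF F] by auto
      then obtain z where z: "(z, y) \<in> F" using yV yR unfolding roots_def by blast
      have "{(z, y)} \<in> DT_R V E R" using z Ff unfolding DT_R_def by blast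
      then have "z = x" using nz by blast
      then show ?thesis using z by simp
    qed
    have "\<forall>F \<in> facets (DT_R V E R). tree_root V F y = r \<and> root_path F y = insert (x, y) P"
    proof
      fix F assume F: "F \<in> facets (DT_R V E R)"
      have Ff: "dforest E F" using facet_forest[OF F] by blast
      note pl = path_lemma[OF Ff all[OF F]]
      show "tree_root V F y = r \<and> root_path F y = insert (x, y) P"
        using pl rP F by auto
    qed
    then have "left_vertex V E R y" unfolding left_vertex_def by blast
    then show False using yr by blast
  qed
  have part2: "\<forall>F \<in> DT_R V E R. (\<forall>z. (z, y) \<notin> F) \<longrightarrow> insert (x, y) F \<in> DT_R V E R"
  proof (intro ballI impI)
    fix F assume F: "F \<in> DT_R V E R" and nF: "\<forall>z. (z, y) \<notin> F"
    from F obtain T where T: "F \<subseteq> T" "dforest E T" "roots V T = R" unfolding DT_R_def by blast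
    have Tf: "T \<in> facets (DT_R V E R)" using forest_facet[OF assms(2) T(2,3)] .
    obtain w where w: "(w, y) \<in> T" using yV yR T(3) unfolding roots_def by blast
    define T' where "T' = insert (x, y) (T - {(w, y)})"
    have FT': "insert (x, y) F \<subseteq> T'" using T(1) nF unfolding T'_def by blast
    have E': "T' \<subseteq> E" using df_sub[OF T(2)] F0(2) df_sub[OF F0f(1)] unfolding T'_def by blast
    have uniq: "\<forall>a c b. (a, b) \<in> T' \<longrightarrow> (c, b) \<in> T' \<longrightarrow> a = c"
    proof (intro allI impI)
      fix a c b assume ab: "(a, b) \<in> T'" and cb: "(c, b) \<in> T'"
      have u: "\<And>p q v. (p, v) \<in> T \<Longrightarrow> (q, v) \<in> T \<Longrightarrow> p = q"
        using df_uniq[OF T(2)] by blast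
      show "a = c"
      proof (cases "b = y")
        case True
        then have "a = x" "c = x" using ab cb u[OF w] unfolding T'_def by auto
        then show ?thesis by simp
      next
        case False
        then have "(a, b) \<in> T" "(c, b) \<in> T" using ab cb unfolding T'_def by auto
        then show ?thesis using u by blast
      qed
    qed
    have noyx: "(y, x) \<notin> (T - {(w, y)})\<^sup>*"
    proof
      assume "(y, x) \<in> (T - {(w, y)})\<^sup>*"
      then have yx: "(y, x) \<in> T\<^sup>*" using rtrancl_mono[of "T - {(w, y)}" T] by blast
      then have "(w, y) \<in> root_path T x" using w unfolding root_path_def by blast
      then have "(w, y) \<in> root_path F0 x" using rP Tf F0(1) by metis
      then have "(y, x) \<in> F0\<^sup>*" unfolding root_path_def by blast
      then have "(x, x) \<in> F0\<^sup>+" using F0(2) by (meson rtrancl_into_trancl2)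
      then show False using df_acyc[OF F0f(1)] by (simp add: acyclic_def)
    qed
    have "acyclic (T - {(w, y)})" using df_acyc[OF T(2)]
      by (meson Diff_subset acyclic_subset)
    then have ac: "acyclic T'" using noyx unfolding T'_def by (simp add: acyclic_insert)
    have rt: "roots V T' = R"
    proof -
      have "roots V T' = roots V T" unfolding roots_def T'_def using w by auto
      then show ?thesis using T(3) by simp
    qed
    have "dforest E T'" using df_intro[OF E' ac] uniq by blast
    then show "insert (x, y) F \<in> DT_R V E R" using FT' rt unfolding DT_R_def by blast
  qed
  show ?thesis unfolding nice_def using part1 part2 by blast
qed

end
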